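(* Let $(\sigma,\rho)$ and $(\nu,\varrho)$ be two $G$-compatible pairs. The lattices $L_{(\sigma,\rho)}=\sigma^{-1}\mathbb Z^n\rtimes_\eta\rho\mathbb Z^m$ and $L_{(\nu,\varrho)}=\nu^{-1}\mathbb Z^n\rtimes_\eta\varrho\mathbb Z^m$ are commensurable if and only if $$\left(\mathrm{rank}_{\mathbb Z}(\sigma^{-1}\mathbb Z^n\cap\nu^{-1}\mathbb Z^n),\ \mathrm{rank}_{\mathbb Z}(\rho\mathbb Z^m\cap\varrho\mathbb Z^m)\right)=(n,m).$$
   Context: Fix integers $1\le m\le n$. Let $\Delta_1,\dots,\Delta_m\in\mathbb R^{n\times n}$ be linearly independent, nonsingular, traceless diagonal matrices $\Delta_i=\mathrm{diag}(d_1^{(i)},\dots,d_n^{(i)})$ such that for each $i$, $d_k^{(i)}\neq d_j^{(i)}$ whenever $k\neq j$. For $t=(t_1,\dots,t_m)^T\in\mathbb R^m$ write $t\cdot\Delta=\sum_{i=1}^m t_i\Delta_i$ and $\eta(t)=e^{t\cdot\Delta}$. Let $G=\mathbb R^n\rtimes_\eta\mathbb R^m$ be the Lie group with underlying set $\mathbb R^n\times\mathbb R^m$ and multiplication $(x,t)(y,s)=(x+e^{t\cdot\Delta}y,\ t+s)$. A pair $(\sigma,\rho)\in GL_n(\mathbb R)\times GL_m(\mathbb R)$ is called $G$-compatible if $\sigma\exp(\rho^{(j)}\cdot\Delta)\sigma^{-1}\in SL_n(\mathbb Z)$ for all $j=1,\dots,m$, where $\rho^{(j)}$ is the $j$-th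 column of $\rho$. For such a pair, $\sigma^{-1}\mathbb Z^n\rtimes_\eta\rho\mathbb Z^m$ denotes the subgroup $\{(\sigma^{-1}v,\rho p): v\in\mathbb Z^n, p\in\mathbb Z^m\}$ of $G$, which is a lattice. Two lattices $\Gamma,\Gamma'$ in $G$ are commensurable if $[\Gamma:\Gamma\cap\Gamma']<\infty$ and $[\Gamma':\Gamma\cap\Gamma']<\infty$. *)

theory Defs
  imports "HOL-Analysis.Analysis"
begin

text \<open>The traceless diagonal matrices Delta_1..Delta_m are given by their diagonals
  d i :: real^'n (i :: 'm).  eta d t = e^{t.Delta} is the diagonal matrix with entries
  exp (sum_i t_i d_k^(i)), i.e. the matrix exponential of the diagonal matrix t.Delta.\<close>

definition eta :: "('m::finite \<Rightarrow> real^'n::finite) \<Rightarrow> real^'m \<Rightarrow> real^'n^'n" where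
  "eta d t = (\<chi> k l. if k = l then exp (\<Sum>i\<in>UNIV. t $ i * d i $ k) else 0)"

definition gmul :: "('m::finite \<Rightarrow> real^'n::finite) \<Rightarrow> (real^'n) \<times> (real^'m) \<Rightarrow> (real^'n) \<times> (real^'m) \<Rightarrow> (real^'n) \<times> (real^'m)" where
  "gmul d g h = (fst g + eta d (snd g) *v fst h, snd g + snd h)"

definition int_vec :: "real^'k::finite \<Rightarrow> bool" where
  "int_vec v \<longleftrightarrow> (\<forall>i. v $ i \<in> \<int>)"

definition int_lattice :: "real^'k::finite^'k \<Rightarrow> (real^'k) set" where
  "int_lattice A = {A *v v | v. int_vec v}"

definition SL_int :: "real^'n::finite^'n \<Rightarrow> bool" where
  "SL_int A \<longleftrightarrow> (\<forall>i j. A $ i $ j \<in> \<int>) \<and> det A = 1"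

definition G_compatible :: "('m::finite \<Rightarrow> real^'n::finite) \<Rightarrow> real^'n^'n \<Rightarrow> real^'m^'m \<Rightarrow> bool" where
  "G_compatible d \<sigma> \<rho> \<longleftrightarrow> invertible \<sigma> \<and> invertible \<rho> \<and>
     (\<forall>j. SL_int (\<sigma> ** eta d (column j \<rho>) ** matrix_inv \<sigma>))"

definition lat :: "real^'n::finite^'n \<Rightarrow> real^'m::finite^'m \<Rightarrow> ((real^'n) \<times> (real^'m)) set" where
  "lat \<sigma> \<rho> = {(matrix_inv \<sigma> *v v, \<rho> *v p) | v p. int_vec v \<and> int_vec p}"

definition finite_index :: "('m::finite \<Rightarrow> real^'n::finite) \<Rightarrow> ((real^'n) \<times> (real^'m)) set \<Rightarrow> ((real^'n) \<times> (real^'m)) set \<Rightarrow> bool" where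
  "finite_index d \<Gamma> H \<longleftrightarrow> finite {gmul d g ` H | g. g \<in> \<Gamma>}"

definition commensurable :: "('m::finite \<Rightarrow> real^'n::finite) \<Rightarrow> ((real^'n) \<times> (real^'m)) set \<Rightarrow> ((real^'n) \<times> (real^'m)) set \<Rightarrow> bool" where
  "commensurable d \<Gamma> \<Gamma>' \<longleftrightarrow> finite_index d \<Gamma> (\<Gamma> \<inter> \<Gamma>') \<and> finite_index d \<Gamma>' (\<Gamma> \<inter> \<Gamma>')"

definition Z_independent :: "'a::real_vector set \<Rightarrow> bool" where
  "Z_independent S \<longleftrightarrow> finite S \<and>
     (\<forall>c::'a \<Rightarrow> int. (\<Sum>v\<in>S. of_int (c v) *\<^sub>R v) = 0 \<longrightarrow> (\<forall>v\<in>S. c v = 0))"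

definition Z_rank :: "'a::real_vector set \<Rightarrow> nat" where
  "Z_rank H = (GREATEST k. \<exists>S. S \<subseteq> H \<and> Z_independent S \<and> card S = k)"

end

theory Submission
  imports Defs
begin


definition zgrp :: "'a::real_vector set \<Rightarrow> bool" where
  "zgrp A \<longleftrightarrow> 0 \<in> A \<and> (\<forall>x\<in>A. \<forall>y\<in>A. x + y \<in> A) \<and> (\<forall>x\<in>A. -x \<in> A)"

lemma minv:
  fixes A :: "real^'k::finite^'k"
  assumes "invertible A"
  shows "A ** matrix_inv A = mat 1" "matrix_inv A ** A = mat 1"
proof -
  have "\<exists>A'. A ** A' = mat 1 \<and> A' ** A = mat 1" using assms unfolding invertible_def by auto
  then have "A ** matrix_inv A = mat 1 \<and> matrix_inv A ** A = mat 1"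
    unfolding matrix_inv_def by (rule someI_ex)
  then show "A ** matrix_inv A = mat 1" "matrix_inv A ** A = mat 1" by auto
qed

lemma invertible_minv:
  fixes A :: "real^'k::finite^'k"
  assumes "invertible A"
  shows "invertible (matrix_inv A)"
  using minv[OF assms] unfolding invertible_def by blast

lemma minv_vec:
  fixes A :: "real^'k::finite^'k"
  assumes "invertible A"
  shows "A *v (matrix_inv A *v x) = x" "matrix_inv A *v (A *v x) = x"
  using minv[OF assms] by (simp_all add: matrix_vector_mul_assoc)

lemma zgrp_nat:
  assumes "zgrp A" "x \<in> A"
  shows "of_nat k *\<^sub>R x \<in> A"
proof (induction k)
  case 0 then show ?case using assms by (simp add: zgrp_def)
next
  case (Suc k)
  have "of_nat (Suc k) *\<^sub>R x = of_nat k *\<^sub>R x + x" by (simp add: algebra_simps)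
  then show ?case using Suc assms by (simp add: zgrp_def)
qed

lemma zgrp_int:
  assumes "zgrp A" "x \<in> A"
  shows "of_int k *\<^sub>R x \<in> A"
proof (cases "k \<ge> 0")
  case True
  then have e: "real_of_int k = real (nat k)" by simp
  show ?thesis by (subst e) (rule zgrp_nat[OF assms])
next
  case False
  then have "of_int k *\<^sub>R x = - (of_nat (nat (-k)) *\<^sub>R x)" by simp
  moreover have "of_nat (nat (-k)) *\<^sub>R x \<in> A" by (rule zgrp_nat[OF assms])
  ultimately show ?thesis using assms(1) unfolding zgrp_def by metis
qed

lemma zgrp_sum:
  assumes "zgrp A" "finite I" "\<And>i. i \<in> I \<Longrightarrow> f i \<in> A"
  shows "sum f I \<in> A"
  using assms(2,3)
proof (induction I rule: finite_induct)
  case empty then show ?case using assms(1) by (simp add: zgrp_def)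
next
  case (insert a I) then show ?case using assms(1) by (simp add: zgrp_def)
qed

lemma zgrp_Int: "zgrp A \<Longrightarrow> zgrp B \<Longrightarrow> zgrp (A \<inter> B)"
  by (simp add: zgrp_def)

lemma int_vec_add: "int_vec v \<Longrightarrow> int_vec w \<Longrightarrow> int_vec (v + w)"
  by (simp add: int_vec_def)
lemma int_vec_minus: "int_vec v \<Longrightarrow> int_vec (- v)"
  by (simp add: int_vec_def)
lemma int_vec_diff: "int_vec v \<Longrightarrow> int_vec w \<Longrightarrow> int_vec (v - w)"
  by (simp add: int_vec_def)
lemma int_vec_zero: "int_vec 0"
  by (simp add: int_vec_def)
lemma int_vec_axis: "int_vec (axis i 1)"
  by (simp add: int_vec_def axis_def)
lemma int_vec_scale: "k \<in> \<int> \<Longrightarrow> int_vec v \<Longrightarrow> int_vec (k *\<^sub>R v)"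
  by (simp add: int_vec_def)

lemma int_mat_vec:
  fixes U :: "real^'k::finite^'j::finite"
  assumes "\<forall>i j. U $ i $ j \<in> \<int>" "int_vec v"
  shows "int_vec (U *v v)"
  using assms unfolding int_vec_def matrix_vector_mult_def
  by (auto intro!: Ints_sum Ints_mult)

lemma zgrp_int_lattice: "zgrp (int_lattice T)"
  unfolding zgrp_def int_lattice_def
proof (intro conjI ballI)
  show "0 \<in> {T *v v |v. int_vec v}" using int_vec_zero by (metis (mono_tags) CollectI matrix_vector_mult_0_right)
next
  fix x y assume "x \<in> {T *v v |v. int_vec v}" "y \<in> {T *v v |v. int_vec v}"
  then obtain v w where "x = T *v v" "y = T *v w" "int_vec v" "int_vec w" by auto
  then show "x + y \<in> {T *v v |v. int_vec v}"
    by (metis (mono_tags, lifting) CollectI int_vec_add matrix_vector_right_distrib)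
next
  fix x assume "x \<in> {T *v v |v. int_vec v}"
  then obtain v where "x = T *v v" "int_vec v" by auto
  then show "-x \<in> {T *v v |v. int_vec v}"
  proof -
    have "-x = T *v (-v)" using \<open>x = T *v v\<close>
      by (simp add: vec_eq_iff matrix_vector_mult_def sum_negf)
    then show ?thesis using int_vec_minus[OF \<open>int_vec v\<close>] by blast
  qed
qed

lemma mat_vec_expand:
  fixes T :: "real^'k::finite^'j::finite"
  shows "T *v v = (\<Sum>i\<in>UNIV. v $ i *\<^sub>R (T *v axis i 1))"
proof -
  have ax: "(T *v axis i 1) $ j = T$j$i" for i j
    by (simp add: matrix_vector_mult_def axis_def mult.commute[of _ "if _ then _ else _"] if_distrib sum.delta cong: if_cong)
  show ?thesis
  proof (rule vec_eq_iff[THEN iffD2], intro allI)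
    fix j
    have "(\<Sum>i\<in>UNIV. v $ i *\<^sub>R (T *v axis i 1)) $ j = (\<Sum>i\<in>UNIV. v $ i * T$j$i)"
      by (simp add: sum_component ax)
    then show "(T *v v) $ j = (\<Sum>i\<in>UNIV. v $ i *\<^sub>R (T *v axis i 1)) $ j"
      by (simp add: matrix_vector_mult_def mult.commute)
  qed
qed

lemma int_lattice_axis: "T *v axis i 1 \<in> int_lattice T"
  unfolding int_lattice_def using int_vec_axis by blast


lemma hamel:
  fixes x :: real
  assumes "x \<noteq> 0"
  shows "\<exists>f :: real \<Rightarrow> rat. f x = 1 \<and> (\<forall>a b. f (a + b) = f a + f b) \<and>
           (\<forall>q a. f (of_rat q * a) = q * f a)"
proof -
  interpret vector_space_pair "\<lambda>q (a::real). of_rat q * a" "\<lambda>q (r::rat). q * r"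
    by unfold_locales (simp_all add: algebra_simps of_rat_add of_rat_mult)
  have ind: "vs1.independent {x}" using assms by simp
  define f where "f = construct {x} (\<lambda>_. 1)"
  interpret lin: Vector_Spaces.linear "\<lambda>q (a::real). of_rat q * a" "\<lambda>q (r::rat). q * r" f
    unfolding f_def by (rule linear_construct[OF ind])
  have "f x = 1" unfolding f_def by (rule construct_basis[OF ind]) simp
  moreover have "\<forall>a b. f (a + b) = f a + f b" using lin.add by simp
  moreover have "\<forall>q a. f (of_rat q * a) = q * f a" using lin.scale by simp
  ultimately show ?thesis by blast
qed

lemma Ints_floor: "(x::'a::floor_ceiling) \<in> \<int> \<Longrightarrow> of_int \<lfloor>x\<rfloor> = x"
  by (metis Ints_cases floor_of_int)

lemma clear_denoms:
  fixes r :: "'a \<Rightarrow> rat"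
  assumes "finite S"
  shows "\<exists>D::int. D > 0 \<and> (\<forall>s\<in>S. of_int D * r s \<in> \<int>)"
  using assms
proof (induction S rule: finite_induct)
  case empty then show ?case by (intro exI[of _ 1]) simp
next
  case (insert a S)
  then obtain D where D: "D > 0" "\<forall>s\<in>S. of_int D * r s \<in> \<int>" by blast
  obtain p q where pq: "quotient_of (r a) = (p, q)" by (cases "quotient_of (r a)")
  have q: "q > 0" using quotient_of_denom_pos[OF pq] .
  have ra: "r a = of_int p / of_int q" using quotient_of_div[OF pq] .
  have "of_int (D * q) * r a = of_int (D * p)" using q by (simp add: ra)
  then have 1: "of_int (D * q) * r a \<in> \<int>" by (metis Ints_of_int)
  have 2: "of_int (D * q) * r s \<in> \<int>" if "s \<in> S" for s
  proof -
    have "of_int (D * q) * r s = of_int q * (of_int D * r s)" by simp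
    then show ?thesis using D(2) that by (metis Ints_mult Ints_of_int)
  qed
  show ?case using 1 2 D q by (intro exI[of _ "D * q"]) auto
qed

lemma f_sum:
  fixes f :: "real \<Rightarrow> rat"
  assumes add: "\<forall>a b. f (a + b) = f a + f b" and "finite S"
  shows "f (\<Sum>s\<in>S. g s) = (\<Sum>s\<in>S. f (g s))"
proof -
  have f0: "f 0 = 0" using add[rule_format, of 0 0] by simp
  show ?thesis using assms(2) by (induction S rule: finite_induct) (simp_all add: f0 add)
qed

lemma mat_vec_sum_scale:
  fixes T :: "real^'k::finite^'j::finite"
  shows "T *v (\<Sum>s\<in>S. a s *\<^sub>R x s) = (\<Sum>s\<in>S. a s *\<^sub>R (T *v x s))"
  by (simp add: linear_sum[OF matrix_vector_mul_linear] linear_scale[OF matrix_vector_mul_linear])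

lemma int_dep:
  fixes S :: "(real^'k::finite) set" and T :: "real^'k^'k"
  assumes fin: "finite S" and sub: "S \<subseteq> int_lattice T" and inv: "invertible T"
    and dep: "\<not> independent S"
  shows "\<not> Z_independent S"
proof -
  obtain c s0 where c: "(\<Sum>s\<in>S. c s *\<^sub>R s) = 0" and s0: "s0 \<in> S" "c s0 \<noteq> 0"
    using dep fin unfolding independent_explicit by blast
  obtain f :: "real \<Rightarrow> rat" where f1: "f (c s0) = 1" and fadd: "\<forall>a b. f (a + b) = f a + f b"
    and fscale: "\<forall>q a. f (of_rat q * a) = q * f a"
    using hamel[OF s0(2)] by blast
  define w where "w s = matrix_inv T *v s" for s
  have wint: "int_vec (w s)" if sS: "s \<in> S" for s
  proof -
    obtain v where "s = T *v v" "int_vec v" using sub sS unfolding int_lattice_def by blast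
    then show ?thesis unfolding w_def using minv_vec[OF inv] by simp
  qed
  have Tw: "T *v w s = s" for s unfolding w_def using minv_vec[OF inv] by simp
  define z where "z s i = \<lfloor>w s $ i\<rfloor>" for s i
  have zw: "real_of_int (z s i) = w s $ i" if "s \<in> S" for s i
    unfolding z_def using wint[OF that] unfolding int_vec_def by (simp add: Ints_floor)
  have "matrix_inv T *v (\<Sum>s\<in>S. c s *\<^sub>R s) = 0" using c by simp
  then have "(\<Sum>s\<in>S. c s *\<^sub>R w s) = 0" unfolding w_def mat_vec_sum_scale .
  then have eqi: "(\<Sum>s\<in>S. c s * real_of_int (z s i)) = 0" for i
    using zw by (simp add: vec_eq_iff sum_component cong: sum.cong)
  have req: "(\<Sum>s\<in>S. of_int (z s i) * f (c s)) = 0" for i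
  proof -
    have "f (\<Sum>s\<in>S. c s * real_of_int (z s i)) = (\<Sum>s\<in>S. f (c s * real_of_int (z s i)))"
      by (rule f_sum[OF fadd fin])
    also have "\<dots> = (\<Sum>s\<in>S. of_int (z s i) * f (c s))"
    proof (rule sum.cong[OF refl])
      fix s
      have "c s * real_of_int (z s i) = of_rat (of_int (z s i)) * c s" by simp
      then show "f (c s * real_of_int (z s i)) = of_int (z s i) * f (c s)"
        using fscale by metis
    qed
    finally show ?thesis using eqi fadd[rule_format, of 0 0] by simp
  qed
  obtain D :: int where D: "D > 0" "\<forall>s\<in>S. of_int D * f (c s) \<in> \<int>"
    using clear_denoms[OF fin, of "\<lambda>s. f (c s)"] by blast
  define e where "e s = \<lfloor>of_int D * f (c s)\<rfloor>" for s
  have e: "of_int (e s) = of_int D * f (c s)" if "s \<in> S" for s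
    unfolding e_def using D(2) that by (simp add: Ints_floor)
  have ieq: "(\<Sum>s\<in>S. e s * z s i) = 0" for i
  proof -
    have "(of_int (\<Sum>s\<in>S. e s * z s i) :: rat) = (\<Sum>s\<in>S. of_int (e s) * of_int (z s i))" by simp
    also have "\<dots> = (\<Sum>s\<in>S. of_int D * (of_int (z s i) * f (c s)))"
      by (rule sum.cong[OF refl]) (simp add: e)
    also have "\<dots> = of_int D * (\<Sum>s\<in>S. of_int (z s i) * f (c s))" by (simp add: sum_distrib_left)
    also have "\<dots> = 0" using req by simp
    finally show ?thesis by (simp only: of_int_eq_0_iff)
  qed
  have "(\<Sum>s\<in>S. real_of_int (e s) *\<^sub>R w s) = 0"
  proof (rule vec_eq_iff[THEN iffD2], intro allI)
    fix i
    have "(\<Sum>s\<in>S. real_of_int (e s) *\<^sub>R w s) $ i = (\<Sum>s\<in>S. real_of_int (e s) * real_of_int (z s i))"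
      by (simp add: sum_component zw)
    also have "\<dots> = real_of_int (\<Sum>s\<in>S. e s * z s i)" by simp
    also have "\<dots> = 0" using ieq by simp
    finally show "(\<Sum>s\<in>S. real_of_int (e s) *\<^sub>R w s) $ i = 0 $ i" by simp
  qed
  then have "T *v (\<Sum>s\<in>S. real_of_int (e s) *\<^sub>R w s) = 0" by simp
  then have "(\<Sum>s\<in>S. real_of_int (e s) *\<^sub>R s) = 0" unfolding mat_vec_sum_scale Tw .
  moreover have "e s0 \<noteq> 0"
  proof -
    have "(of_int (e s0) :: rat) = of_int D" using e[OF s0(1)] f1 by simp
    then show ?thesis using D(1) by simp
  qed
  ultimately show ?thesis using s0(1) unfolding Z_independent_def by blast
qed

lemma Zind_ind:
  fixes S :: "(real^'k::finite) set" and T :: "real^'k^'k"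
  assumes "Z_independent S" "S \<subseteq> int_lattice T" "invertible T"
  shows "independent S" "card S \<le> CARD('k)"
proof -
  show "independent S" using int_dep assms unfolding Z_independent_def by blast
  then show "card S \<le> CARD('k)" using independent_bound[of S] by simp
qed


definition full :: "real^'k::finite^'k \<Rightarrow> (real^'k) set \<Rightarrow> bool" where
  "full T A \<longleftrightarrow> (\<forall>i. \<exists>N::int. N > 0 \<and> of_int N *\<^sub>R (T *v axis i 1) \<in> A)"

lemma inv_zero:
  fixes T :: "real^'k::finite^'k"
  assumes "invertible T" "T *v x = 0"
  shows "x = 0"
  using minv_vec(2)[OF assms(1), of x] assms(2) by simp

lemma rank_of_full:
  fixes T :: "real^'k::finite^'k"
  assumes inv: "invertible T" and sub: "A \<subseteq> int_lattice T" and fu: "full T A"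
  shows "Z_rank A = CARD('k)"
proof -
  obtain N where N: "\<And>i. N i > (0::int) \<and> of_int (N i) *\<^sub>R (T *v axis i 1) \<in> A"
    using fu unfolding full_def by metis
  define g where "g i = of_int (N i) *\<^sub>R (T *v axis i 1)" for i
  have gT: "g i = T *v (of_int (N i) *\<^sub>R axis i 1)" for i
    unfolding g_def by (simp add: matrix_vector_mult_scaleR)
  have inj: "inj g"
  proof (rule injI)
    fix i j assume "g i = g j"
    then have "T *v (of_int (N i) *\<^sub>R axis i 1 - of_int (N j) *\<^sub>R axis j 1) = 0"
      unfolding gT by (simp add: matrix_vector_mult_diff_distrib)
    then have "of_int (N i) *\<^sub>R axis i 1 - of_int (N j) *\<^sub>R axis j 1 = (0::real^'k)"
      by (rule inv_zero[OF inv])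
    then have "(of_int (N i) *\<^sub>R axis i 1 - of_int (N j) *\<^sub>R axis j 1) $ i = (0::real)" by simp
    then show "i = j" using N[of i] by (auto simp: axis_def split: if_splits)
  qed
  let ?S = "range g"
  have Sind: "Z_independent ?S"
    unfolding Z_independent_def
  proof (intro conjI allI impI ballI)
    show "finite ?S" by simp
    fix c :: "real^'k \<Rightarrow> int" and s
    assume c: "(\<Sum>v\<in>?S. real_of_int (c v) *\<^sub>R v) = 0" and s: "s \<in> ?S"
    have "(\<Sum>v\<in>?S. real_of_int (c v) *\<^sub>R v) = (\<Sum>i\<in>UNIV. real_of_int (c (g i)) *\<^sub>R g i)"
      by (simp add: sum.reindex[OF inj])
    also have "\<dots> = T *v (\<Sum>i\<in>UNIV. real_of_int (c (g i)) *\<^sub>R (of_int (N i) *\<^sub>R axis i 1))"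
      unfolding gT mat_vec_sum_scale ..
    finally have "(\<Sum>i\<in>UNIV. real_of_int (c (g i)) *\<^sub>R (of_int (N i) *\<^sub>R axis i 1)) = (0::real^'k)"
      using c inv_zero[OF inv] by simp
    then have "\<forall>j. (\<Sum>i\<in>UNIV. real_of_int (c (g i)) *\<^sub>R (of_int (N i) *\<^sub>R axis i 1)) $ j = (0::real)"
      by simp
    then have "\<forall>j. real_of_int (c (g j)) * of_int (N j) = 0"
      by (simp add: sum_component axis_def if_distrib sum.delta cong: if_cong)
    then have "\<forall>j. c (g j) = 0" using N by (metis of_int_0_eq_iff of_int_mult mult_eq_0_iff less_irrefl)
    then show "c s = 0" using s by auto
  qed
  have Scard: "card ?S = CARD('k)" using inj by (simp add: card_image)
  have SA: "?S \<subseteq> A" using N unfolding g_def by auto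
  show ?thesis unfolding Z_rank_def
  proof (rule Greatest_equality)
    show "\<exists>S\<subseteq>A. Z_independent S \<and> card S = CARD('k)" using Sind Scard SA by blast
  next
    fix y assume "\<exists>S\<subseteq>A. Z_independent S \<and> card S = y"
    then obtain S where "S \<subseteq> A" "Z_independent S" "card S = y" by blast
    then show "y \<le> CARD('k)" using Zind_ind(2)[of S T] sub inv by auto
  qed
qed

lemma full_of_rank:
  fixes T :: "real^'k::finite^'k"
  assumes inv: "invertible T" and sub: "A \<subseteq> int_lattice T" and zg: "zgrp A"
    and rk: "Z_rank A = CARD('k)"
  shows "full T A"
proof -
  let ?P = "\<lambda>k. \<exists>S\<subseteq>A. Z_independent S \<and> card S = k"
  have P0: "?P 0" by (intro exI[of _ "{}"]) (simp add: Z_independent_def)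
  have bnd: "\<forall>y. ?P y \<longrightarrow> y \<le> CARD('k)"
    using Zind_ind(2)[of _ T] sub inv by blast
  have "?P (Greatest ?P)" by (rule GreatestI_nat[of ?P 0, OF P0]) (use bnd in blast)
  then obtain S where S: "S \<subseteq> A" "Z_independent S" "card S = CARD('k)"
    using rk unfolding Z_rank_def by auto
  have finS: "finite S" using S(2) unfolding Z_independent_def by simp
  show ?thesis unfolding full_def
  proof
    fix i
    let ?x = "T *v axis i 1"
    show "\<exists>N::int. N > 0 \<and> of_int N *\<^sub>R ?x \<in> A"
    proof (cases "?x \<in> S")
      case True then show ?thesis using S(1) by (intro exI[of _ 1]) auto
    next
      case False
      let ?S' = "insert ?x S"
      have fin': "finite ?S'" using finS by simp
      have sub': "?S' \<subseteq> int_lattice T" using S(1) sub int_lattice_axis by blast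
      have "card ?S' = CARD('k) + 1" using False finS S(3) by simp
      then have "\<not> independent ?S'" using independent_bound[of ?S'] by auto
      then have "\<not> Z_independent ?S'" using int_dep[OF fin' sub' inv] by blast
      then obtain c :: "real^'k \<Rightarrow> int" where
        c: "(\<Sum>v\<in>?S'. of_int (c v) *\<^sub>R v) = 0" and nz: "\<exists>v\<in>?S'. c v \<noteq> 0"
        using fin' unfolding Z_independent_def by blast
      have cs: "of_int (c ?x) *\<^sub>R ?x + (\<Sum>v\<in>S. of_int (c v) *\<^sub>R v) = 0"
        using c False finS by simp
      have cx: "c ?x \<noteq> 0"
      proof
        assume "c ?x = 0"
        then have "(\<Sum>v\<in>S. of_int (c v) *\<^sub>R v) = 0" using cs by simp
        then have "\<forall>v\<in>S. c v = 0" using S(2) unfolding Z_independent_def by blast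
        then show False using nz \<open>c ?x = 0\<close> by auto
      qed
      have inA: "(\<Sum>v\<in>S. of_int (c v) *\<^sub>R v) \<in> A"
        by (rule zgrp_sum[OF zg finS]) (use S(1) zgrp_int[OF zg] in blast)
      have xA: "of_int (c ?x) *\<^sub>R ?x \<in> A"
      proof -
        have "of_int (c ?x) *\<^sub>R ?x = - (\<Sum>v\<in>S. of_int (c v) *\<^sub>R v)" using cs by (simp add: eq_neg_iff_add_eq_0)
        then show ?thesis using inA zg unfolding zgrp_def by metis
      qed
      show ?thesis
      proof (cases "c ?x > 0")
        case True then show ?thesis using xA by blast
      next
        case False
        have "of_int (- c ?x) *\<^sub>R ?x \<in> A"
          using xA zg unfolding zgrp_def by (metis of_int_minus scaleR_minus_left)
        then show ?thesis using False cx by (intro exI[of _ "- c ?x"]) auto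
      qed
    qed
  qed
qed

lemma uniform_of_full:
  fixes T :: "real^'k::finite^'k"
  assumes zg: "zgrp A" and fu: "full T A"
  shows "\<exists>N::int. N > 0 \<and> (\<forall>x\<in>int_lattice T. of_int N *\<^sub>R x \<in> A)"
proof -
  obtain N where N: "\<And>i. N i > (0::int) \<and> of_int (N i) *\<^sub>R (T *v axis i 1) \<in> A"
    using fu unfolding full_def by metis
  define M where "M = (\<Prod>i\<in>UNIV. N i)"
  have Mpos: "M > 0" unfolding M_def using N by (simp add: prod_pos)
  have Mi: "of_int M *\<^sub>R (T *v axis i 1) \<in> A" for i
  proof -
    have "M = (\<Prod>j\<in>UNIV - {i}. N j) * N i"
      unfolding M_def by (simp add: prod.remove mult.commute)
    then have "of_int M *\<^sub>R (T *v axis i 1) = of_int (\<Prod>j\<in>UNIV - {i}. N j) *\<^sub>R (of_int (N i) *\<^sub>R (T *v axis i 1))"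
      by simp
    then show ?thesis using zgrp_int[OF zg N[THEN conjunct2]] by metis
  qed
  have "of_int M *\<^sub>R x \<in> A" if xL: "x \<in> int_lattice T" for x
  proof -
    obtain v where v: "x = T *v v" "int_vec v" using xL unfolding int_lattice_def by blast
    have "of_int M *\<^sub>R x = (\<Sum>i\<in>UNIV. v $ i *\<^sub>R (of_int M *\<^sub>R (T *v axis i 1)))"
      unfolding v(1) mat_vec_expand[of T v] by (simp add: scaleR_sum_right mult.commute)
    also have "\<dots> = (\<Sum>i\<in>UNIV. of_int \<lfloor>v $ i\<rfloor> *\<^sub>R (of_int M *\<^sub>R (T *v axis i 1)))"
      using v(2) unfolding int_vec_def by (simp add: Ints_floor)
    also have "\<dots> \<in> A"
      by (rule zgrp_sum[OF zg]) (use zgrp_int[OF zg Mi] in auto)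
    finally show ?thesis .
  qed
  then show ?thesis using Mpos by blast
qed


lemma mat_vec_neg: "(A::real^'k::finite^'j::finite) *v (- x) = - (A *v x)"
  by (simp add: vec_eq_iff matrix_vector_mult_def sum_negf)

lemma eta_vec: "eta d t *v x = (\<chi> k. exp (\<Sum>i\<in>UNIV. t $ i * d i $ k) * x $ k)"
proof -
  have e: "\<And>P a (b::real). (if P then a else 0) * b = (if P then a * b else 0)" by simp
  show ?thesis by (simp add: eta_def matrix_vector_mult_def vec_eq_iff e sum.delta cong: if_cong)
qed

lemma eta_add_vec: "eta d (s + t) *v x = eta d s *v (eta d t *v x)"
  by (simp add: eta_vec vec_eq_iff algebra_simps sum.distrib exp_add)

lemma eta_zero_vec: "eta d 0 *v x = x"
  by (simp add: eta_vec vec_eq_iff)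

lemma eta_cancel: "eta d (- t) *v (eta d t *v x) = x" "eta d t *v (eta d (- t) *v x) = x"
  by (simp_all flip: eta_add_vec add: eta_zero_vec)

lemma det_int:
  fixes M :: "real^'k::finite^'k"
  assumes "\<forall>i j. M $ i $ j \<in> \<int>"
  shows "det M \<in> \<int>"
  unfolding det_def using assms by (intro Ints_sum Ints_mult Ints_prod) auto

lemma eta_pres:
  assumes comp: "G_compatible d \<sigma> \<rho>" and t: "t \<in> int_lattice \<rho>"
    and x: "x \<in> int_lattice (matrix_inv \<sigma>)"
  shows "eta d t *v x \<in> int_lattice (matrix_inv \<sigma>)"
proof -
  let ?L = "int_lattice (matrix_inv \<sigma>)"
  have invs: "invertible \<sigma>" using comp unfolding G_compatible_def by simp
  define Good where "Good = {t. \<forall>x\<in>?L. eta d t *v x \<in> ?L \<and> eta d (- t) *v x \<in> ?L}"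
  have zg: "zgrp Good"
    unfolding zgrp_def Good_def
    by (auto simp: eta_zero_vec eta_add_vec[of _ "-_" "-_", simplified] eta_add_vec)
  have col: "\<rho> *v axis j 1 \<in> Good" for j
  proof -
    let ?c = "\<rho> *v axis j 1"
    have cc: "column j \<rho> = ?c"
      by (simp add: column_def matrix_vector_mult_def axis_def vec_eq_iff if_distrib sum.delta cong: if_cong)
    let ?U = "\<sigma> ** eta d ?c ** matrix_inv \<sigma>"
    have U: "\<forall>i j. ?U $ i $ j \<in> \<int>" "det ?U = 1"
      using comp cc unfolding G_compatible_def SL_int_def by metis+
    have Uv: "?U *v v = \<sigma> *v (eta d ?c *v (matrix_inv \<sigma> *v v))" for v
      by (simp add: matrix_vector_mul_assoc matrix_mul_assoc)
    show ?thesis unfolding Good_def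
    proof (intro CollectI ballI conjI)
      fix x assume "x \<in> ?L"
      then obtain v where v: "x = matrix_inv \<sigma> *v v" "int_vec v" unfolding int_lattice_def by blast
      have "eta d ?c *v x = matrix_inv \<sigma> *v (?U *v v)"
        unfolding Uv v(1) minv_vec(2)[OF invs] ..
      moreover have "int_vec (?U *v v)" using int_mat_vec[OF U(1) v(2)] .
      ultimately show "eta d ?c *v x \<in> ?L" unfolding int_lattice_def by blast
      define y where "y = (\<chi> k. det(\<chi> i j. if j=k then v$i else ?U$i$j) / det ?U)"
      have Uy: "?U *v y = v" unfolding y_def using cramer[of ?U] U(2) by simp
      have yint: "int_vec y" unfolding y_def int_vec_def using U v(2)
        by (auto intro!: det_int simp: int_vec_def)
      have "x = eta d ?c *v (matrix_inv \<sigma> *v y)"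
        unfolding v(1) Uy[symmetric] Uv minv_vec(2)[OF invs] ..
      then have "eta d (- ?c) *v x = matrix_inv \<sigma> *v y" by (simp add: eta_cancel)
      then show "eta d (- ?c) *v x \<in> ?L" using yint unfolding int_lattice_def by blast
    qed
  qed
  obtain p where p: "t = \<rho> *v p" "int_vec p" using t unfolding int_lattice_def by blast
  have "t = (\<Sum>j\<in>UNIV. of_int \<lfloor>p $ j\<rfloor> *\<^sub>R (\<rho> *v axis j 1))"
    unfolding p(1) mat_vec_expand[of \<rho> p] using p(2) unfolding int_vec_def by (simp add: Ints_floor)
  also have "\<dots> \<in> Good"
    by (rule zgrp_sum[OF zg]) (use zgrp_int[OF zg col] in auto)
  finally show ?thesis using x unfolding Good_def by blast
qed

definition ginv :: "('m::finite \<Rightarrow> real^'n::finite) \<Rightarrow> (real^'n) \<times> (real^'m) \<Rightarrow> (real^'n) \<times> (real^'m)" where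
  "ginv d g = (- (eta d (- snd g) *v fst g), - snd g)"

lemma gmul_assoc: "gmul d (gmul d g h) k = gmul d g (gmul d h k)"
  by (simp add: gmul_def eta_add_vec matrix_vector_right_distrib algebra_simps)

lemma gmul_ginv: "gmul d g (ginv d g) = (0, 0)"
  by (simp add: gmul_def ginv_def mat_vec_neg eta_cancel)

lemma gmul_unit: "gmul d (0, 0) h = h"
  by (simp add: gmul_def eta_zero_vec)

definition sgrp where
  "sgrp d H \<longleftrightarrow> (\<forall>g\<in>H. \<forall>h\<in>H. gmul d g h \<in> H) \<and> (\<forall>g\<in>H. ginv d g \<in> H)"

lemma sgrp_coset:
  assumes "sgrp d H" "h0 \<in> H"
  shows "gmul d h0 ` H = H"
proof
  show "gmul d h0 ` H \<subseteq> H" using assms unfolding sgrp_def by auto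
  show "H \<subseteq> gmul d h0 ` H"
  proof
    fix h assume h: "h \<in> H"
    have "h = gmul d h0 (gmul d (ginv d h0) h)"
      by (simp flip: gmul_assoc add: gmul_ginv gmul_unit)
    moreover have "gmul d (ginv d h0) h \<in> H" using assms h unfolding sgrp_def by auto
    ultimately show "h \<in> gmul d h0 ` H" by blast
  qed
qed

lemma coset_shift:
  assumes "sgrp d H" "h0 \<in> H"
  shows "gmul d (gmul d g h0) ` H = gmul d g ` H"
proof -
  have "gmul d (gmul d g h0) ` H = gmul d g ` (gmul d h0 ` H)"
    by (auto simp: gmul_assoc image_iff)
  then show ?thesis using sgrp_coset[OF assms] by simp
qed


lemma FI_imp:
  assumes fi: "finite_index d (L \<times> P) (A \<times> B)" and zL: "zgrp L" and zP: "zgrp P"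
    and A0: "0 \<in> A" and B0: "0 \<in> B"
  shows "\<forall>x\<in>L. \<exists>N::int. N > 0 \<and> of_int N *\<^sub>R x \<in> A"
    and "\<forall>t\<in>P. \<exists>N::int. N > 0 \<and> of_int N *\<^sub>R t \<in> B"
proof -
  let ?H = "A \<times> B"
  let ?C = "{gmul d g ` ?H | g. g \<in> L \<times> P}"
  have finC: "finite ?C" using fi unfolding finite_index_def .
  have H0: "(0, 0) \<in> ?H" using A0 B0 by simp
  have notinj: "\<exists>i j. i \<noteq> j \<and> f i = f j" if "\<And>j. f j \<in> ?C" for f :: "nat \<Rightarrow> _"
  proof (rule ccontr)
    assume "\<not> ?thesis"
    then have "inj f" unfolding inj_def by blast
    then have "infinite (range f)" by (rule range_inj_infinite)
    moreover have "range f \<subseteq> ?C" using that by blast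
    ultimately show False using finC finite_subset by blast
  qed
  show "\<forall>x\<in>L. \<exists>N::int. N > 0 \<and> of_int N *\<^sub>R x \<in> A"
  proof
    fix x assume x: "x \<in> L"
    define f where "f j = gmul d (of_nat j *\<^sub>R x, 0) ` ?H" for j :: nat
    have "f j \<in> ?C" for j
      unfolding f_def using zgrp_nat[OF zL x] zP unfolding zgrp_def by blast
    then obtain i j where ij: "i \<noteq> j" "f i = f j" using notinj by blast
    have key: "\<exists>N::int. N > 0 \<and> of_int N *\<^sub>R x \<in> A" if "f i = f j" "i < j" for i j
    proof -
      have "(of_nat j *\<^sub>R x, 0) = gmul d (of_nat j *\<^sub>R x, 0) (0, 0)"
        by (simp add: gmul_def)
      then have "(of_nat j *\<^sub>R x, 0) \<in> f i" using that(1) H0 unfolding f_def by auto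
      then obtain a b where ab: "a \<in> A" "(of_nat j *\<^sub>R x, 0) = gmul d (of_nat i *\<^sub>R x, 0) (a, b)"
        unfolding f_def by auto
      then have "of_nat j *\<^sub>R x = of_nat i *\<^sub>R x + a" by (simp add: gmul_def eta_zero_vec)
      then have "a = of_int (int j - int i) *\<^sub>R x" by (simp add: algebra_simps)
      then show ?thesis using ab(1) that(2) by (intro exI[of _ "int j - int i"]) auto
    qed
    show "\<exists>N::int. N > 0 \<and> of_int N *\<^sub>R x \<in> A"
    proof (cases "i < j")
      case True then show ?thesis using key ij by blast
    next
      case False then have "j < i" using ij by simp
      then show ?thesis using key ij by metis
    qed
  qed
  show "\<forall>t\<in>P. \<exists>N::int. N > 0 \<and> of_int N *\<^sub>R t \<in> B"
  proof
    fix t assume t: "t \<in> P"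
    define f where "f j = gmul d (0, of_nat j *\<^sub>R t) ` ?H" for j :: nat
    have "f j \<in> ?C" for j
      unfolding f_def using zgrp_nat[OF zP t] zL unfolding zgrp_def by blast
    then obtain i j where ij: "i \<noteq> j" "f i = f j" using notinj by blast
    have key: "\<exists>N::int. N > 0 \<and> of_int N *\<^sub>R t \<in> B" if "f i = f j" "i < j" for i j
    proof -
      have "(0, of_nat j *\<^sub>R t) = gmul d (0, of_nat j *\<^sub>R t) (0, 0)"
        by (simp add: gmul_def)
      then have "(0, of_nat j *\<^sub>R t) \<in> f i" using that(1) H0 unfolding f_def by auto
      then obtain a b where ab: "b \<in> B" "(0, of_nat j *\<^sub>R t) = gmul d (0, of_nat i *\<^sub>R t) (a, b)"
        unfolding f_def by auto
      then have "of_nat j *\<^sub>R t = of_nat i *\<^sub>R t + b" by (simp add: gmul_def)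
      then have "b = of_int (int j - int i) *\<^sub>R t" by (simp add: algebra_simps)
      then show ?thesis using ab(1) that(2) by (intro exI[of _ "int j - int i"]) auto
    qed
    show "\<exists>N::int. N > 0 \<and> of_int N *\<^sub>R t \<in> B"
    proof (cases "i < j")
      case True then show ?thesis using key ij by blast
    next
      case False then have "j < i" using ij by simp
      then show ?thesis using key ij by metis
    qed
  qed
qed

lemma fin_box:
  assumes "finite S"
  shows "finite {v::real^'k::finite. \<forall>i. v $ i \<in> S}"
proof -
  have "{v::real^'k. \<forall>i. v $ i \<in> S} \<subseteq> vec_lambda ` (PiE UNIV (\<lambda>_. S))"
  proof
    fix v :: "real^'k" assume "v \<in> {v. \<forall>i. v $ i \<in> S}"
    then have "(\<lambda>i. v $ i) \<in> PiE UNIV (\<lambda>_. S)" by auto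
    moreover have "v = vec_lambda (\<lambda>i. v $ i)" by simp
    ultimately show "v \<in> vec_lambda ` (PiE UNIV (\<lambda>_. S))" by blast
  qed
  moreover have "finite (PiE (UNIV::'k set) (\<lambda>_. S))" using assms by (simp add: finite_PiE)
  ultimately show ?thesis using finite_subset by blast
qed

lemma split_mod:
  fixes v :: "real^'k::finite" and N :: int
  assumes "int_vec v"
  defines "v' \<equiv> (\<chi> i. of_int (\<lfloor>v $ i\<rfloor> mod N))" and "w \<equiv> (\<chi> i. of_int (\<lfloor>v $ i\<rfloor> div N))"
  shows "v = v' + of_int N *\<^sub>R w" "int_vec w" "N > 0 \<Longrightarrow> \<forall>i. v' $ i \<in> of_int ` {0..<N}"
proof -
  show "v = v' + of_int N *\<^sub>R w"
  proof (rule vec_eq_iff[THEN iffD2], intro allI)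
    fix i
    have e: "v $ i = of_int \<lfloor>v $ i\<rfloor>" using assms(1) unfolding int_vec_def by (simp add: Ints_floor)
    have z: "real_of_int \<lfloor>v $ i\<rfloor> = real_of_int (\<lfloor>v $ i\<rfloor> mod N) + real_of_int N * real_of_int (\<lfloor>v $ i\<rfloor> div N)"
      by (metis mod_mult_div_eq of_int_add of_int_mult)
    show "v $ i = (v' + of_int N *\<^sub>R w) $ i" unfolding v'_def w_def using e z by simp
  qed
  show "int_vec w" unfolding w_def int_vec_def by simp
  show "N > 0 \<Longrightarrow> \<forall>i. v' $ i \<in> of_int ` {0..<N}" unfolding v'_def by auto
qed

lemma FI_suff:
  fixes T :: "real^'n::finite^'n" and R :: "real^'m::finite^'m"
    and d :: "'m \<Rightarrow> real^'n"
  assumes sg: "sgrp d (A \<times> B)"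
    and pres: "\<forall>t\<in>int_lattice R. \<forall>x\<in>int_lattice T. eta d t *v x \<in> int_lattice T"
    and N: "N > 0" "\<forall>x\<in>int_lattice T. of_int N *\<^sub>R x \<in> A"
    and M: "M > 0" "\<forall>t\<in>int_lattice R. of_int M *\<^sub>R t \<in> B"
  shows "finite_index d (int_lattice T \<times> int_lattice R) (A \<times> B)"
proof -
  let ?H = "A \<times> B"
  define V where "V = {v::real^'n. \<forall>i. v $ i \<in> of_int ` {0..<N}}"
  define W where "W = {v::real^'m. \<forall>i. v $ i \<in> of_int ` {0..<M}}"
  define F where "F = (\<lambda>(v, p). (T *v v, R *v p)) ` (V \<times> W)"
  have finF: "finite F" unfolding F_def V_def W_def by (intro finite_imageI finite_cartesian_product fin_box) auto
  have A0: "0 \<in> A" using N(2) zgrp_int_lattice[of T] unfolding zgrp_def by force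
  have B0: "0 \<in> B" using M(2) zgrp_int_lattice[of R] unfolding zgrp_def by force
  have "{gmul d g ` ?H | g. g \<in> int_lattice T \<times> int_lattice R} \<subseteq> (\<lambda>g. gmul d g ` ?H) ` F"
  proof
    fix C assume "C \<in> {gmul d g ` ?H | g. g \<in> int_lattice T \<times> int_lattice R}"
    then obtain x t where C: "C = gmul d (x, t) ` ?H" and x: "x \<in> int_lattice T" and t: "t \<in> int_lattice R"
      by auto
    obtain v where v: "x = T *v v" "int_vec v" using x unfolding int_lattice_def by blast
    obtain p where p: "t = R *v p" "int_vec p" using t unfolding int_lattice_def by blast
    define p' where "p' = (\<chi> i. (of_int (\<lfloor>p $ i\<rfloor> mod M) :: real))"
    define q where "q = (\<chi> i. (of_int (\<lfloor>p $ i\<rfloor> div M) :: real))"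
    have pp: "p = p' + of_int M *\<^sub>R q" "int_vec q" "\<forall>i. p' $ i \<in> of_int ` {0..<M}"
      using split_mod[OF p(2), of M] M(1) unfolding p'_def q_def by auto
    define v' where "v' = (\<chi> i. (of_int (\<lfloor>v $ i\<rfloor> mod N) :: real))"
    define w where "w = (\<chi> i. (of_int (\<lfloor>v $ i\<rfloor> div N) :: real))"
    have vv: "v = v' + of_int N *\<^sub>R w" "int_vec w" "\<forall>i. v' $ i \<in> of_int ` {0..<N}"
      using split_mod[OF v(2), of N] N(1) unfolding v'_def w_def by auto
    let ?t' = "R *v p'"
    have b: "of_int M *\<^sub>R (R *v q) \<in> B" using M(2) pp(2) unfolding int_lattice_def by blast
    have g1: "(x, t) = gmul d (x, ?t') (0, of_int M *\<^sub>R (R *v q))"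
      unfolding gmul_def p(1) pp(1) by (simp add: matrix_vector_right_distrib matrix_vector_mult_scaleR)
    have t'L: "- ?t' \<in> int_lattice R"
    proof -
      have "int_vec p'" unfolding p'_def int_vec_def by simp
      then have "?t' \<in> int_lattice R" unfolding int_lattice_def by blast
      then show ?thesis using zgrp_int_lattice[of R] unfolding zgrp_def by blast
    qed
    let ?y = "eta d (- ?t') *v (T *v w)"
    have yL: "?y \<in> int_lattice T"
      using pres t'L vv(2) unfolding int_lattice_def by blast
    have a: "of_int N *\<^sub>R ?y \<in> A" using N(2) yL by blast
    have g2: "(x, ?t') = gmul d (T *v v', ?t') (of_int N *\<^sub>R ?y, 0)"
      unfolding gmul_def v(1) vv(1)
      by (simp add: matrix_vector_right_distrib matrix_vector_mult_scaleR eta_cancel)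
    have "C = gmul d (x, ?t') ` ?H"
      unfolding C by (subst g1, rule coset_shift[OF sg]) (use b A0 in simp)
    also have "\<dots> = gmul d (T *v v', ?t') ` ?H"
      by (subst g2, rule coset_shift[OF sg]) (use a B0 in simp)
    finally have "C = gmul d (T *v v', R *v p') ` ?H" .
    moreover have "(T *v v', R *v p') \<in> F" unfolding F_def V_def W_def using vv(3) pp(3) by auto
    ultimately show "C \<in> (\<lambda>g. gmul d g ` ?H) ` F" by blast
  qed
  then show ?thesis unfolding finite_index_def using finF finite_subset by blast
qed


lemma lat_eq: "lat \<sigma> \<rho> = int_lattice (matrix_inv \<sigma>) \<times> int_lattice \<rho>"
  unfolding lat_def int_lattice_def by blast

lemma sgrp_H:
  assumes c1: "G_compatible d \<sigma> \<rho>" and c2: "G_compatible d \<nu> \<rr>"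
  shows "sgrp d ((int_lattice (matrix_inv \<sigma>) \<inter> int_lattice (matrix_inv \<nu>)) \<times>
                 (int_lattice \<rho> \<inter> int_lattice \<rr>))"
  unfolding sgrp_def
proof (intro conjI ballI)
  let ?A = "int_lattice (matrix_inv \<sigma>) \<inter> int_lattice (matrix_inv \<nu>)"
  let ?B = "int_lattice \<rho> \<inter> int_lattice \<rr>"
  have zA: "zgrp ?A" and zB: "zgrp ?B" by (simp_all add: zgrp_Int zgrp_int_lattice)
  have pA: "eta d b *v a \<in> ?A" if "a \<in> ?A" "b \<in> ?B" for a b
    using eta_pres[OF c1] eta_pres[OF c2] that by blast
  fix g h assume g: "g \<in> ?A \<times> ?B"
  show "ginv d g \<in> ?A \<times> ?B"
  proof -
    have "- snd g \<in> ?B" using g zB unfolding zgrp_def by auto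
    then have "eta d (- snd g) *v fst g \<in> ?A" using pA g by auto
    then show ?thesis unfolding ginv_def using zA zB g unfolding zgrp_def by auto
  qed
  assume h: "h \<in> ?A \<times> ?B"
  show "gmul d g h \<in> ?A \<times> ?B"
    unfolding gmul_def using pA g h zA zB unfolding zgrp_def by auto
qed

theorem mainTheorem3:
  fixes d :: "'m::finite \<Rightarrow> real^'n::finite"
    and \<sigma> \<nu> :: "real^'n^'n" and \<rho> \<rr> :: "real^'m^'m"
  assumes mn: "CARD('m) \<le> CARD('n)"
    and lin_indep: "\<forall>c :: 'm \<Rightarrow> real. (\<Sum>i\<in>UNIV. c i *\<^sub>R d i) = 0 \<longrightarrow> (\<forall>i. c i = 0)"
    and nonsing: "\<forall>i k. d i $ k \<noteq> 0"
    and traceless: "\<forall>i. (\<Sum>k\<in>UNIV. d i $ k) = 0"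
    and distinct_entries: "\<forall>i k j. k \<noteq> j \<longrightarrow> d i $ k \<noteq> d i $ j"
    and comp1: "G_compatible d \<sigma> \<rho>"
    and comp2: "G_compatible d \<nu> \<rr>"
  shows "commensurable d (lat \<sigma> \<rho>) (lat \<nu> \<rr>) \<longleftrightarrow>
         (Z_rank (int_lattice (matrix_inv \<sigma>) \<inter> int_lattice (matrix_inv \<nu>)) = CARD('n) \<and>
          Z_rank (int_lattice \<rho> \<inter> int_lattice \<rr>) = CARD('m))"
proof -
  define T1 where "T1 = matrix_inv \<sigma>"
  define T2 where "T2 = matrix_inv \<nu>"
  define A where "A = int_lattice T1 \<inter> int_lattice T2"
  define B where "B = int_lattice \<rho> \<inter> int_lattice \<rr>"
  have iT1: "invertible T1" unfolding T1_def using comp1 invertible_minv unfolding G_compatible_def by blast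
  have iT2: "invertible T2" unfolding T2_def using comp2 invertible_minv unfolding G_compatible_def by blast
  have ir1: "invertible \<rho>" using comp1 unfolding G_compatible_def by blast
  have ir2: "invertible \<rr>" using comp2 unfolding G_compatible_def by blast
  have zA: "zgrp A" and zB: "zgrp B" unfolding A_def B_def by (simp_all add: zgrp_Int zgrp_int_lattice)
  have A0: "0 \<in> A" and B0: "0 \<in> B" using zA zB unfolding zgrp_def by auto
  have Hint: "lat \<sigma> \<rho> \<inter> lat \<nu> \<rr> = A \<times> B"
    unfolding lat_eq A_def B_def T1_def T2_def by blast
  have sg: "sgrp d (A \<times> B)" unfolding A_def B_def T1_def T2_def by (rule sgrp_H[OF comp1 comp2])
  have com: "commensurable d (lat \<sigma> \<rho>) (lat \<nu> \<rr>) \<longleftrightarrow>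
      finite_index d (int_lattice T1 \<times> int_lattice \<rho>) (A \<times> B) \<and>
      finite_index d (int_lattice T2 \<times> int_lattice \<rr>) (A \<times> B)"
    unfolding commensurable_def Hint unfolding lat_eq T1_def T2_def ..
  show ?thesis
    unfolding com T1_def[symmetric] T2_def[symmetric] A_def[symmetric] B_def[symmetric]
  proof
    assume fi: "finite_index d (int_lattice T1 \<times> int_lattice \<rho>) (A \<times> B) \<and>
      finite_index d (int_lattice T2 \<times> int_lattice \<rr>) (A \<times> B)"
    note F = FI_imp[OF fi[THEN conjunct1] zgrp_int_lattice zgrp_int_lattice A0 B0]
    have fu1: "full T1 A" unfolding full_def using F(1) int_lattice_axis by blast
    have r1: "Z_rank A = CARD('n)" by (rule rank_of_full[OF iT1 _ fu1]) (simp add: A_def)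
    have fu2: "full \<rho> B" unfolding full_def using F(2) int_lattice_axis by blast
    have r2: "Z_rank B = CARD('m)" by (rule rank_of_full[OF ir1 _ fu2]) (simp add: B_def)
    show "Z_rank A = CARD('n) \<and> Z_rank B = CARD('m)" using r1 r2 by simp
  next
    assume rk: "Z_rank A = CARD('n) \<and> Z_rank B = CARD('m)"
    have f1: "full T1 A" by (rule full_of_rank[OF iT1 _ zA]) (use rk A_def in auto)
    have f2: "full T2 A" by (rule full_of_rank[OF iT2 _ zA]) (use rk A_def in auto)
    have f3: "full \<rho> B" by (rule full_of_rank[OF ir1 _ zB]) (use rk B_def in auto)
    have f4: "full \<rr> B" by (rule full_of_rank[OF ir2 _ zB]) (use rk B_def in auto)
    obtain N1 where N1: "N1 > 0" "\<forall>x\<in>int_lattice T1. of_int N1 *\<^sub>R x \<in> A" using uniform_of_full[OF zA f1] by blast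
    obtain N2 where N2: "N2 > 0" "\<forall>x\<in>int_lattice T2. of_int N2 *\<^sub>R x \<in> A" using uniform_of_full[OF zA f2] by blast
    obtain M1 where M1: "M1 > 0" "\<forall>x\<in>int_lattice \<rho>. of_int M1 *\<^sub>R x \<in> B" using uniform_of_full[OF zB f3] by blast
    obtain M2 where M2: "M2 > 0" "\<forall>x\<in>int_lattice \<rr>. of_int M2 *\<^sub>R x \<in> B" using uniform_of_full[OF zB f4] by blast
    have p1: "\<forall>t\<in>int_lattice \<rho>. \<forall>x\<in>int_lattice T1. eta d t *v x \<in> int_lattice T1"
      unfolding T1_def using eta_pres[OF comp1] by blast
    have p2: "\<forall>t\<in>int_lattice \<rr>. \<forall>x\<in>int_lattice T2. eta d t *v x \<in> int_lattice T2"
      unfolding T2_def using eta_pres[OF comp2] by blast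
    show "finite_index d (int_lattice T1 \<times> int_lattice \<rho>) (A \<times> B) \<and>
      finite_index d (int_lattice T2 \<times> int_lattice \<rr>) (A \<times> B)"
      using FI_suff[OF sg p1 N1 M1] FI_suff[OF sg p2 N2 M2] by blast
  qed
qed

end
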